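(* Let $\phi\in C^3((0,\infty))$, $\eta=\phi'$ and $\hat\eta(r)=\eta(r)+2\eta(2r)$, and suppose there are constants $0<a_0<\tilde r_1<\tilde r_2<2a_0$ and $a_1>a_0$ such that: $\eta'(r)>0$ for $0<r<\tilde r_1$ and $\eta'(r)<0$ for $r>\tilde r_1$; $\eta''(r)<0$ for $0<r<\tilde r_2$ and $\eta''(r)>0$ for $r>\tilde r_2$; $\hat\eta(r)<0$ for $0<r<a_0$ and $\hat\eta(r)>0$ for $r>a_0$; $\hat\eta'(r)>0$ for $0<r<a_1$ and $\hat\eta'(r)<0$ for $r>a_1$. Let $N,K$ be positive integers with $K<N-1$. For $\mathbf r=(r_{-N},\dots,r_N)\in(0,\infty)^{2N+1}$ define forces $F^{QCF}_j(\mathbf r)$, $j=-N,\dots,N+1$, by $F^{QCF}_{-N}(\mathbf r)=\eta(r_{-N})+2\eta(2r_{-N})$; $F^{QCF}_j(\mathbf r)=[\eta(r_j)+2\eta(2r_j)]-[\eta(r_{j-1})+2\eta(2r_{j-1})]$ for $-N+1\le j\le -K$ and for $K+1\le j\le N$; $F^{QCF}_j(\mathbf r)=[\eta(r_j)+\eta(r_j+r_{j+1})]-[\eta(r_{j-1})+\eta(r_{j-1}+r_{j-2})]$ for $-K+1\le j\le K$; $F^{QCF}_{N+1}(\mathbf r)=-[\eta(r_N)+2\eta(2r_N)]$. Let $f_{-N},\dots,f_{N+1}\in\mathbb R$ be anti-symmetric, i.e. $f_{j+1}=-f_{-j}$ for $j=0,\dots,N$, and set $\Phi_j=-\sum_{i=-N}^{j}f_i$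 for $j=-N,\dots,N$. Suppose $r_L,r_U$ satisfy $\tilde r_2/2<r_L<r_U$ and $\eta'(r_U)+12\eta'(2r_L)\ge0$. If $\eta(r_L)+4\eta(2r_L)-2\eta(2r_U)<\Phi_j<\eta(r_U)+4\eta(2r_U)-2\eta(2r_L)$ for $j=-N,\dots,N$, then the equilibrium equations $F^{QCF}_j(\mathbf r)+f_j=0$, $j=-N,\dots,N+1$, have a unique symmetric solution $\mathbf r$ in $\Omega=(r_L,r_U)^{2N+1}$.
   Context: $F^{QCF}_j$ is the force-based quasicontinuum force on the $j$-th representative atom of a one-dimensional chain, expressed in terms of the lattice spacings $r_j$ ($-K+1\le j\le K$ atomistic, the rest continuum), with nearest and next-nearest neighbour pair interactions given by $\phi$; $f_j$ are external forces. A vector $\mathbf r$ is symmetric if $r_{-j}=r_j$ for $j=1,\dots,N$. *)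

theory Defs
  imports "HOL-Analysis.Analysis"
begin

definition hat_eta :: "(real \<Rightarrow> real) \<Rightarrow> real \<Rightarrow> real" where
  "hat_eta \<eta> r = \<eta> r + 2 * \<eta> (2 * r)"

text \<open>Force-based quasicontinuum forces F^QCF_j(r), j = -N..N+1; r is indexed by integers
  (only r_{-N},...,r_N are used). Outside the index range the value is 0 (irrelevant).\<close>
definition Fqcf :: "(real \<Rightarrow> real) \<Rightarrow> int \<Rightarrow> int \<Rightarrow> (int \<Rightarrow> real) \<Rightarrow> int \<Rightarrow> real" where
  "Fqcf \<eta> N K r j =
    (if j = -N then hat_eta \<eta> (r (-N))
     else if (-N + 1 \<le> j \<and> j \<le> -K) \<or> (K + 1 \<le> j \<and> j \<le> N)
       then hat_eta \<eta> (r j) - hat_eta \<eta> (r (j - 1))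
     else if -K + 1 \<le> j \<and> j \<le> K
       then (\<eta> (r j) + \<eta> (r j + r (j + 1))) - (\<eta> (r (j - 1)) + \<eta> (r (j - 1) + r (j - 2)))
     else if j = N + 1 then - hat_eta \<eta> (r N)
     else 0)"

definition Omega :: "int \<Rightarrow> real \<Rightarrow> real \<Rightarrow> (int \<Rightarrow> real) set" where
  "Omega N rL rU = {r. (\<forall>j\<in>{-N..N}. rL < r j \<and> r j < rU) \<and> (\<forall>j. j \<notin> {-N..N} \<longrightarrow> r j = 0)}"

definition symmetric_vec :: "int \<Rightarrow> (int \<Rightarrow> real) \<Rightarrow> bool" where
  "symmetric_vec N r \<longleftrightarrow> (\<forall>j\<in>{1..N}. r (-j) = r j)"

end

theory Submission
  imports Defs
begin


lemma fixpoint_box: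
  fixes S :: "int set" and a b c :: real and T :: "(int \<Rightarrow> real) \<Rightarrow> (int \<Rightarrow> real)"
  assumes fin: "finite S" and ne: "S \<noteq> {}" and ab: "a \<le> b"
   and Tin: "\<And>x. (\<forall>i\<in>S. a \<le> x i \<and> x i \<le> b) \<Longrightarrow> T x \<in> extensional S \<and> (\<forall>i\<in>S. a \<le> T x i \<and> T x i \<le> b)"
   and c: "0 \<le> c" "c < 1"
   and con: "\<And>x y \<delta>. (\<forall>i\<in>S. a \<le> x i \<and> x i \<le> b) \<Longrightarrow> (\<forall>i\<in>S. a \<le> y i \<and> y i \<le> b) \<Longrightarrow> (\<forall>i\<in>S. \<bar>x i - y i\<bar> \<le> \<delta>) \<Longrightarrow> \<forall>i\<in>S. \<bar>T x i - T y i\<bar> \<le> c * \<delta>"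
  shows "\<exists>x. x \<in> extensional S \<and> (\<forall>i\<in>S. a \<le> x i \<and> x i \<le> b) \<and> T x = x"
proof -
  interpret Sub: Submetric UNIV dist "{a..b}"
    by unfold_locales auto
  have "Sub.sub.mcomplete"
    by (rule Sub.closedin_mcomplete_imp_mcomplete) (auto simp: closed_atLeastAtMost)
  interpret F: Metric_space "Sub.sub.fspace S" "Sub.sub.fdist S"
    by (rule Sub.sub.Metric_space_funspace)
  have "mcomplete_of (funspace S (Sub.sub.Self))"
    by (rule Sub.sub.mcomplete_funspace) fact
  then have Fc: "F.mcomplete"
    by (simp add: mcomplete_of_def Sub.sub.Self_def)
  have fsp: "x \<in> Sub.sub.fspace S \<longleftrightarrow> x \<in> extensional S \<and> (\<forall>i\<in>S. a \<le> x i \<and> x i \<le> b)" for x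
  proof -
    have "Sub.sub.mbounded (x ` S)" if "\<forall>i\<in>S. a \<le> x i \<and> x i \<le> b"
      using that fin by (auto simp: Sub.mbounded_submetric intro: finite_imp_bounded)
    then show ?thesis unfolding Sub.sub.fspace_def by auto
  qed
  have "\<exists>x. x \<in> Sub.sub.fspace S \<and> T x = x"
  proof (rule F.Banach_fixedpoint_thm[OF Fc])
    show "Sub.sub.fspace S \<noteq> {}"
      using fsp[of "restrict (\<lambda>_. a) S"] ab by auto
    show "T \<in> Sub.sub.fspace S \<rightarrow> Sub.sub.fspace S"
      using Tin fsp by auto
    show "c < 1" by fact
    fix x y assume x: "x \<in> Sub.sub.fspace S" and y: "y \<in> Sub.sub.fspace S"
    have d: "\<forall>i\<in>S. \<bar>x i - y i\<bar> \<le> Sub.sub.fdist S x y"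
      using Sub.sub.funspace_mdist_le[OF x y ne, of "Sub.sub.fdist S x y"] by (simp add: dist_real_def)
    have "\<forall>i\<in>S. \<bar>T x i - T y i\<bar> \<le> c * Sub.sub.fdist S x y"
      using con[OF _ _ d] x y fsp by auto
    moreover have "T x \<in> Sub.sub.fspace S" "T y \<in> Sub.sub.fspace S" using Tin fsp x y by auto
    ultimately show "Sub.sub.fdist S (T x) (T y) \<le> c * Sub.sub.fdist S x y"
      using Sub.sub.funspace_mdist_le[OF _ _ ne] by (simp add: dist_real_def)
  qed auto
  then show ?thesis using fsp by blast
qed


context
  fixes \<eta> \<eta>1 \<eta>2 :: "real \<Rightarrow> real" and r1 r2 rL rU :: real
  assumes d1: "\<forall>x>0. (\<eta> has_real_derivative \<eta>1 x) (at x)"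
    and d2: "\<forall>x>0. (\<eta>1 has_real_derivative \<eta>2 x) (at x)"
    and r12: "0 < r1" "r1 < r2"
    and h1: "\<forall>r. r > r1 \<longrightarrow> \<eta>1 r < 0"
    and h2: "\<forall>r. 0 < r \<and> r < r2 \<longrightarrow> \<eta>2 r < 0" "\<forall>r. r > r2 \<longrightarrow> \<eta>2 r > 0"
    and rLU: "r2 / 2 < rL" "rL < rU" "\<eta>1 rU + 12 * \<eta>1 (2 * rL) \<ge> 0"
begin

lemma rL_pos: "0 < rL" using r12 rLU by linarith

lemma E_pos: "\<eta>1 (2 * rL) < 0" using h1 r12 rLU by auto

lemma D_pos: "\<eta>1 rU > 0" "\<eta>1 rU \<ge> -12 * \<eta>1 (2 * rL)" using E_pos rLU by auto

lemma rU_le: "rU \<le> r1"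
proof (rule ccontr)
  assume "\<not> rU \<le> r1"
  then have "\<eta>1 rU < 0" using h1 by auto
  then show False using D_pos by auto
qed

lemma eta1_dec: assumes "0 < s" "s < t" "t < r2" shows "\<eta>1 t < \<eta>1 s"
proof -
  obtain z where z: "s < z" "z < t" "\<eta>1 t - \<eta>1 s = (t - s) * \<eta>2 z"
    using MVT2[of s t \<eta>1 \<eta>2] assms d2 by force
  have "\<eta>2 z < 0" using h2 z assms by auto
  then have "(t - s) * \<eta>2 z < 0" using assms by (simp add: mult_pos_neg)
  then show ?thesis using z by linarith
qed

lemma eta1_inc: assumes "r2 < s" "s < t" shows "\<eta>1 s < \<eta>1 t"
proof -
  obtain z where z: "s < z" "z < t" "\<eta>1 t - \<eta>1 s = (t - s) * \<eta>2 z"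
    using MVT2[of s t \<eta>1 \<eta>2] assms d2 r12 by force
  have "\<eta>2 z > 0" using h2 z assms by auto
  then have "(t - s) * \<eta>2 z > 0" using assms by simp
  then show ?thesis using z by linarith
qed

lemma eta1_lowD: assumes "rL \<le> x" "x \<le> rU" shows "\<eta>1 rU \<le> \<eta>1 x"
  using eta1_dec[of x rU] assms rL_pos rU_le r12 by (cases "x = rU") force+

lemma eta1_2: assumes "2 * rL \<le> s" "s \<le> 2 * rU" shows "\<eta>1 (2 * rL) \<le> \<eta>1 s" "\<eta>1 s < 0"
  using eta1_inc[of "2*rL" s] assms rLU h1 r12 by (cases "s = 2*rL", auto)

lemma lip2_aux: assumes "2 * rL \<le> s" "s < t" "t \<le> 2 * rU"
  shows "\<bar>\<eta> s - \<eta> t\<bar> \<le> - \<eta>1 (2 * rL) * \<bar>s - t\<bar>" "\<eta> t \<le> \<eta> s"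
proof -
  obtain z where z: "s < z" "z < t" "\<eta> t - \<eta> s = (t - s) * \<eta>1 z"
    using MVT2[of s t \<eta> \<eta>1] assms d1 rL_pos by force
  have e: "\<eta>1 (2 * rL) \<le> \<eta>1 z" "\<eta>1 z < 0" using eta1_2[of z] z assms by auto
  have "(t - s) * \<eta>1 z \<le> 0" using e assms by (simp add: mult_nonneg_nonpos)
  then show "\<eta> t \<le> \<eta> s" using z by linarith
  have "(t - s) * \<eta>1 (2 * rL) \<le> (t - s) * \<eta>1 z" using e assms by (simp add: mult_left_mono)
  moreover have "\<bar>\<eta> s - \<eta> t\<bar> = - ((t - s) * \<eta>1 z)" using z \<open>(t - s) * \<eta>1 z \<le> 0\<close> by linarith
  moreover have "\<bar>s - t\<bar> = t - s" using assms by simp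
  ultimately show "\<bar>\<eta> s - \<eta> t\<bar> \<le> - \<eta>1 (2 * rL) * \<bar>s - t\<bar>" by (simp add: algebra_simps)
qed

lemma lip2: assumes "2 * rL \<le> s" "s \<le> 2 * rU" "2 * rL \<le> t" "t \<le> 2 * rU"
  shows "\<bar>\<eta> s - \<eta> t\<bar> \<le> - \<eta>1 (2 * rL) * \<bar>s - t\<bar>"
  using lip2_aux(1)[of s t] lip2_aux(1)[of t s] assms
  by (cases "s < t"; cases "s = t") (auto simp: abs_minus_commute)

lemma mon2: assumes "2 * rL \<le> s" "s \<le> t" "t \<le> 2 * rU" shows "\<eta> t \<le> \<eta> s"
  using lip2_aux(2)[of s t] assms by (cases "s = t") auto

lemma inc1: assumes "rL \<le> x" "x \<le> y" "y \<le> rU" shows "\<eta>1 rU * (y - x) \<le> \<eta> y - \<eta> x"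
proof (cases "x = y")
  case False
  then obtain z where z: "x < z" "z < y" "\<eta> y - \<eta> x = (y - x) * \<eta>1 z"
    using MVT2[of x y \<eta> \<eta>1] assms d1 rL_pos by force
  have "\<eta>1 rU \<le> \<eta>1 z" using eta1_lowD[of z] z assms by auto
  then show ?thesis using z assms by (simp add: mult_left_mono mult.commute)
qed simp

lemma hat_inc: assumes "rL \<le> x" "x < y" "y \<le> rU" shows "hat_eta \<eta> x < hat_eta \<eta> y"
proof -
  define c where "c = - \<eta>1 (2 * rL) * (y - x)"
  have a: "\<eta>1 rU * (y - x) \<le> \<eta> y - \<eta> x" using inc1 assms by auto
  have b: "\<bar>\<eta> (2*y) - \<eta> (2*x)\<bar> \<le> - \<eta>1 (2 * rL) * \<bar>2*y - 2*x\<bar>" using lip2[of "2*y" "2*x"] assms by auto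
  have "- \<eta>1 (2 * rL) * \<bar>2*y - 2*x\<bar> = 2 * c" using assms unfolding c_def by simp
  with b have b2: "\<eta> (2*x) - \<eta> (2*y) \<le> 2 * c" by linarith
  have "- \<eta>1 (2 * rL) * 4 * (y - x) < \<eta>1 rU * (y - x)"
    using D_pos E_pos assms by (intro mult_strict_right_mono) auto
  then have "4 * c < \<eta>1 rU * (y - x)" unfolding c_def by simp
  then show ?thesis using a b2 unfolding hat_eta_def by linarith
qed

lemma eta_isCont: assumes "x > 0" shows "isCont \<eta> x"
proof -
  have "(\<eta> has_real_derivative \<eta>1 x) (at x)" using d1 assms by blast
  then show ?thesis by (rule DERIV_isCont)
qed

lemma eta_cont: "continuous_on {rL..rU} \<eta>"
proof (rule continuous_at_imp_continuous_on, rule ballI)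
  fix x assume "x \<in> {rL..rU}"
  then show "isCont \<eta> x" using eta_isCont rL_pos by auto
qed

lemma hat_cont: "continuous_on {rL..rU} (hat_eta \<eta>)"
proof (rule continuous_at_imp_continuous_on, rule ballI)
  fix x assume x: "x \<in> {rL..rU}"
  have c1: "isCont \<eta> x" using eta_isCont x rL_pos by auto
  have "isCont \<eta> (2*x)" using eta_isCont x rL_pos by auto
  moreover have "isCont (\<lambda>x. 2*x) x" by simp
  ultimately have c2: "isCont (\<lambda>x. \<eta> (2*x)) x" using isCont_o2 by blast
  have "hat_eta \<eta> = (\<lambda>x. \<eta> x + 2 * \<eta> (2*x))" by (simp add: hat_eta_def[abs_def])
  moreover have "isCont (\<lambda>x. \<eta> x + 2 * \<eta> (2*x)) x" using c1 c2 by simp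
  ultimately show "isCont (hat_eta \<eta>) x" by simp
qed

lemma eta_inc: assumes "rL \<le> x" "x < y" "y \<le> rU" shows "\<eta> x < \<eta> y"
proof -
  have "0 < \<eta>1 rU * (y - x)" using D_pos assms by simp
  then show ?thesis using inc1[of x y] assms by auto
qed

definition einv where "einv y = (THE t. t \<in> {rL..rU} \<and> \<eta> t = y)"
definition hinv where "hinv y = (THE t. t \<in> {rL..rU} \<and> hat_eta \<eta> t = y)"

lemma einv: assumes "\<eta> rL < y" "y < \<eta> rU" shows "rL < einv y" "einv y < rU" "\<eta> (einv y) = y"
proof -
  have "\<eta> rL \<le> y" "y \<le> \<eta> rU" "rL \<le> rU" using assms rLU by auto
  from IVT'[OF this eta_cont] obtain t where t: "rL \<le> t" "t \<le> rU" "\<eta> t = y" by blast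
  have u: "s = t" if "s \<in> {rL..rU} \<and> \<eta> s = y" for s
    using eta_inc[of s t] eta_inc[of t s] t that by (cases s t rule: linorder_cases) auto
  have "einv y = t" unfolding einv_def by (rule the_equality) (use t in simp, use u in blast)
  moreover have "t \<noteq> rL" "t \<noteq> rU" using t assms by auto
  ultimately show "rL < einv y" "einv y < rU" "\<eta> (einv y) = y" using t by auto
qed

lemma einv_eta: assumes "rL \<le> t" "t \<le> rU" shows "einv (\<eta> t) = t"
proof -
  have u: "s = t" if "s \<in> {rL..rU} \<and> \<eta> s = \<eta> t" for s
    using eta_inc[of s t] eta_inc[of t s] assms that by (cases s t rule: linorder_cases) auto
  show ?thesis unfolding einv_def by (rule the_equality) (use assms in simp, use u in blast)
qed

lemma hinv: assumes "hat_eta \<eta> rL < y" "y < hat_eta \<eta> rU" shows "rL < hinv y" "hinv y < rU" "hat_eta \<eta> (hinv y) = y"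
proof -
  have "hat_eta \<eta> rL \<le> y" "y \<le> hat_eta \<eta> rU" "rL \<le> rU" using assms rLU by auto
  from IVT'[OF this hat_cont] obtain t where t: "rL \<le> t" "t \<le> rU" "hat_eta \<eta> t = y" by blast
  have u: "s = t" if "s \<in> {rL..rU} \<and> hat_eta \<eta> s = y" for s
    using hat_inc[of s t] hat_inc[of t s] t that by (cases s t rule: linorder_cases) auto
  have "hinv y = t" unfolding hinv_def by (rule the_equality) (use t in simp, use u in blast)
  moreover have "t \<noteq> rL" "t \<noteq> rU" using t assms by auto
  ultimately show "rL < hinv y" "hinv y < rU" "hat_eta \<eta> (hinv y) = y" using t by auto
qed

lemma hat_inj: assumes "rL \<le> s" "s \<le> rU" "rL \<le> t" "t \<le> rU" "hat_eta \<eta> s = hat_eta \<eta> t" shows "s = t"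
  using hat_inc[of s t] hat_inc[of t s] assms by (cases s t rule: linorder_cases) auto

lemma einv_lip: assumes "\<eta> rL < y" "y < \<eta> rU" "\<eta> rL < z" "z < \<eta> rU"
  shows "\<eta>1 rU * \<bar>einv y - einv z\<bar> \<le> \<bar>y - z\<bar>"
proof -
  note a = einv[OF assms(1,2)] and b = einv[OF assms(3,4)]
  show ?thesis
  proof (cases "einv y \<le> einv z")
    case True
    then have "\<eta>1 rU * (einv z - einv y) \<le> \<eta> (einv z) - \<eta> (einv y)"
      using a b by (intro inc1) auto
    moreover have "\<bar>einv y - einv z\<bar> = einv z - einv y" using True by simp
    ultimately show ?thesis using a(3) b(3) by simp
  next
    case False
    then have "\<eta>1 rU * (einv y - einv z) \<le> \<eta> (einv y) - \<eta> (einv z)"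
      using a b by (intro inc1) auto
    moreover have "\<bar>einv y - einv z\<bar> = einv y - einv z" using False by simp
    ultimately show ?thesis using a(3) b(3) by simp
  qed
qed

end


definition Phi :: "(int \<Rightarrow> real) \<Rightarrow> int \<Rightarrow> int \<Rightarrow> real" where
  "Phi f N j = - (\<Sum>i=-N..j. f i)"

definition Cl :: "(real \<Rightarrow> real) \<Rightarrow> int \<Rightarrow> (int \<Rightarrow> real) \<Rightarrow> real" where
  "Cl \<eta> K r = \<eta> (r (-K-1) + r (-K)) + \<eta> (r (-K) + r (-K+1)) - 2 * \<eta> (2 * r (-K))"

definition L2 :: "(real \<Rightarrow> real) \<Rightarrow> int \<Rightarrow> (int \<Rightarrow> real) \<Rightarrow> int \<Rightarrow> real" where
  "L2 \<eta> K r j = \<eta> (r j) + \<eta> (r (j-1) + r j) + \<eta> (r j + r (j+1)) - Cl \<eta> K r"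

definition Lc :: "(real \<Rightarrow> real) \<Rightarrow> int \<Rightarrow> (int \<Rightarrow> real) \<Rightarrow> int \<Rightarrow> real" where
  "Lc \<eta> K r j = (if j \<le> -K then hat_eta \<eta> (r j) else L2 \<eta> K r j)"

lemma Phi_first: "Phi f N (-N) = - f (-N)"
  by (simp add: Phi_def)

lemma Phi_step: assumes "-N < j" shows "Phi f N j = Phi f N (j-1) - f j"
proof -
  have "{-N..j} = insert j {-N..j-1}" using assms by auto
  then show ?thesis by (simp add: Phi_def)
qed

lemma Lc_K: "Lc \<eta> K r (-K) = L2 \<eta> K r (-K)"
  by (simp add: Lc_def L2_def Cl_def hat_eta_def)

lemma F_first: assumes "0 < K" "K < N - 1" shows "Fqcf \<eta> N K r (-N) = Lc \<eta> K r (-N)"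
  using assms by (simp add: Fqcf_def Lc_def)

lemma F_step: assumes "0 < K" "K < N - 1" "-N < j" "j \<le> 0"
  shows "Fqcf \<eta> N K r j = Lc \<eta> K r j - Lc \<eta> K r (j-1)"
proof (cases "j \<le> -K")
  case True
  then show ?thesis using assms by (simp add: Fqcf_def Lc_def)
next
  case False
  have F: "Fqcf \<eta> N K r j = (\<eta> (r j) + \<eta> (r j + r (j + 1))) - (\<eta> (r (j - 1)) + \<eta> (r (j - 1) + r (j - 2)))"
    using assms False by (simp add: Fqcf_def)
  have Lj: "Lc \<eta> K r j = L2 \<eta> K r j" using False by (simp add: Lc_def)
  have Lj1: "Lc \<eta> K r (j-1) = L2 \<eta> K r (j-1)"
  proof (cases "j - 1 = -K")
    case True then show ?thesis using Lc_K by simp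
  next
    case False2: False then show ?thesis using False by (simp add: Lc_def)
  qed
  have "j - 1 - 1 = j - 2" by simp
  then show ?thesis unfolding F Lj Lj1 L2_def by (simp add: algebra_simps)
qed

lemma left_equiv: assumes "0 < K" "K < N - 1"
  shows "(\<forall>j\<in>{-N..0}. Fqcf \<eta> N K r j + f j = 0) \<longleftrightarrow> (\<forall>j\<in>{-N..0}. Lc \<eta> K r j = Phi f N j)"
proof
  assume H: "\<forall>j\<in>{-N..0}. Fqcf \<eta> N K r j + f j = 0"
  have "Lc \<eta> K r (-N + int n) = Phi f N (-N + int n)" if "-N + int n \<le> 0" for n
    using that
  proof (induction n)
    case 0
    have "Fqcf \<eta> N K r (-N) + f (-N) = 0" using H assms by simp
    then show ?case using F_first[OF assms, of \<eta> r] Phi_first[of f N] by simp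
  next
    case (Suc n)
    define j where "j = -N + int (Suc n)"
    have j1: "j - 1 = -N + int n" unfolding j_def by simp
    have "Fqcf \<eta> N K r j + f j = 0" using H Suc.prems unfolding j_def by auto
    moreover have "Fqcf \<eta> N K r j = Lc \<eta> K r j - Lc \<eta> K r (j-1)"
      using F_step[OF assms, of j] Suc.prems unfolding j_def by auto
    moreover have "Phi f N j = Phi f N (j-1) - f j" using Phi_step[of N j f] unfolding j_def by simp
    moreover have "Lc \<eta> K r (j-1) = Phi f N (j-1)" using Suc j1 by simp
    ultimately show ?case unfolding j_def[symmetric] by linarith
  qed
  then show "\<forall>j\<in>{-N..0}. Lc \<eta> K r j = Phi f N j"
    by (metis atLeastAtMost_iff add.commute diff_add_cancel zle_iff_zadd)
next
  assume H: "\<forall>j\<in>{-N..0}. Lc \<eta> K r j = Phi f N j"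
  show "\<forall>j\<in>{-N..0}. Fqcf \<eta> N K r j + f j = 0"
  proof
    fix j assume j: "j \<in> {-N..0}"
    show "Fqcf \<eta> N K r j + f j = 0"
    proof (cases "j = -N")
      case True
      then show ?thesis using H j F_first[OF assms, of \<eta> r] Phi_first[of f N] by auto
    next
      case False
      then have "-N < j" using j by auto
      moreover have "j - 1 \<in> {-N..0}" using j False by auto
      ultimately show ?thesis using H j F_step[OF assms, of j \<eta> r] Phi_step[of N j f] by auto
    qed
  qed
qed

lemma sym_all: assumes "symmetric_vec N r" "-N \<le> i" "i \<le> N" shows "r (-i) = r i"
proof -
  consider "i = 0" | "1 \<le> i" | "1 \<le> -i" by linarith
  then show ?thesis
  proof cases
    case 2 then show ?thesis using assms by (auto simp: symmetric_vec_def)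
  next
    case 3
    have "-i \<in> {1..N}" using 3 assms by auto
    then have "r (- (-i)) = r (-i)" using assms(1) unfolding symmetric_vec_def by blast
    then show ?thesis by simp
  qed simp
qed

lemma F_refl: assumes "symmetric_vec N r" "0 < K" "K < N - 1" "1 \<le> j" "j \<le> N + 1"
  shows "Fqcf \<eta> N K r j = - Fqcf \<eta> N K r (1 - j)"
proof -
  have s: "\<And>i. -N \<le> i \<Longrightarrow> i \<le> N \<Longrightarrow> r (-i) = r i" using sym_all[OF assms(1)] by blast
  consider "j = N + 1" | "K + 1 \<le> j \<and> j \<le> N" | "j \<le> K" using assms by linarith
  then show ?thesis
  proof cases
    case 1
    then show ?thesis using assms s[of N] by (simp add: Fqcf_def)
  next
    case 2
    have a: "r (1 - j) = r (j - 1)" using s[of "j - 1"] 2 assms by simp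
    have b: "r (- j) = r j" using s[of j] 2 assms by simp
    show ?thesis using 2 assms a b by (simp add: Fqcf_def)
  next
    case 3
    have a: "r (1 - j) = r (j - 1)" using s[of "j - 1"] 3 assms by simp
    have b: "r (- j) = r j" using s[of j] 3 assms by simp
    have c: "r (2 - j) = r (j - 2)" using s[of "j - 2"] 3 assms by simp
    have d: "r (- j - 1) = r (j + 1)" using s[of "j + 1"] 3 assms by simp
    have e: "1 - j - 1 = - j" "1 - j + 1 = 2 - j" "1 - j - 2 = -j - 1" by simp_all
    show ?thesis using 3 assms unfolding Fqcf_def e a b c d by (simp add: add.commute)
  qed
qed

lemma full_equiv: assumes "symmetric_vec N r" "0 < K" "K < N - 1"
  and anti: "\<forall>j\<in>{0..N}. f (j + 1) = - f (-j)"
  shows "(\<forall>j\<in>{-N..N+1}. Fqcf \<eta> N K r j + f j = 0) \<longleftrightarrow> (\<forall>j\<in>{-N..0}. Fqcf \<eta> N K r j + f j = 0)"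
proof
  assume "\<forall>j\<in>{-N..N+1}. Fqcf \<eta> N K r j + f j = 0"
  then show "\<forall>j\<in>{-N..0}. Fqcf \<eta> N K r j + f j = 0" using assms by auto
next
  assume H: "\<forall>j\<in>{-N..0}. Fqcf \<eta> N K r j + f j = 0"
  show "\<forall>j\<in>{-N..N+1}. Fqcf \<eta> N K r j + f j = 0"
  proof
    fix j assume j: "j \<in> {-N..N+1}"
    show "Fqcf \<eta> N K r j + f j = 0"
    proof (cases "j \<le> 0")
      case True then show ?thesis using H j by auto
    next
      case False
      have fj: "f j = - f (1 - j)" using anti[rule_format, of "j - 1"] False j by auto
      have "Fqcf \<eta> N K r (1 - j) + f (1 - j) = 0" using H False j by auto
      then show ?thesis using F_refl[OF assms(1-3), of j \<eta>] False j fj by auto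
    qed
  qed
qed



theorem corollary4p6:
  fixes \<phi> \<eta> \<eta>1 \<eta>2 \<eta>3 :: "real \<Rightarrow> real"
    and a0 r1 r2 a1 rL rU :: real and N K :: int and f :: "int \<Rightarrow> real"
  assumes d0: "\<forall>x>0. (\<phi> has_real_derivative \<eta> x) (at x)"
    and d1: "\<forall>x>0. (\<eta> has_real_derivative \<eta>1 x) (at x)"
    and d2: "\<forall>x>0. (\<eta>1 has_real_derivative \<eta>2 x) (at x)"
    and d3: "\<forall>x>0. (\<eta>2 has_real_derivative \<eta>3 x) (at x)"
    and c3: "continuous_on {0<..} \<eta>3"
    and cst: "0 < a0" "a0 < r1" "r1 < r2" "r2 < 2 * a0" "a1 > a0"
    and h1: "\<forall>r. 0 < r \<and> r < r1 \<longrightarrow> \<eta>1 r > 0" "\<forall>r. r > r1 \<longrightarrow> \<eta>1 r < 0"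
    and h2: "\<forall>r. 0 < r \<and> r < r2 \<longrightarrow> \<eta>2 r < 0" "\<forall>r. r > r2 \<longrightarrow> \<eta>2 r > 0"
    and h3: "\<forall>r. 0 < r \<and> r < a0 \<longrightarrow> hat_eta \<eta> r < 0" "\<forall>r. r > a0 \<longrightarrow> hat_eta \<eta> r > 0"
    and h4: "\<forall>r. 0 < r \<and> r < a1 \<longrightarrow> deriv (hat_eta \<eta>) r > 0"
            "\<forall>r. r > a1 \<longrightarrow> deriv (hat_eta \<eta>) r < 0"
    and NK: "0 < K" "K < N - 1"
    and anti: "\<forall>j\<in>{0..N}. f (j + 1) = - f (-j)"
    and rLU: "r2 / 2 < rL" "rL < rU" "\<eta>1 rU + 12 * \<eta>1 (2 * rL) \<ge> 0"
    and Phi: "\<forall>j\<in>{-N..N}.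
        \<eta> rL + 4 * \<eta> (2 * rL) - 2 * \<eta> (2 * rU) < - (\<Sum>i=-N..j. f i) \<and>
        - (\<Sum>i=-N..j. f i) < \<eta> rU + 4 * \<eta> (2 * rU) - 2 * \<eta> (2 * rL)"
  shows "\<exists>!r. r \<in> Omega N rL rU \<and> symmetric_vec N r \<and>
              (\<forall>j\<in>{-N..N+1}. Fqcf \<eta> N K r j + f j = 0)"
proof -
  have r1pos: "0 < r1" using cst by linarith
  note hyp = d1 d2 r1pos cst(3) h1(2) h2(1) h2(2) rLU(1) rLU(2) rLU(3)
  define E where "E = - \<eta>1 (2*rL)"
  define D where "D = \<eta>1 rU"
  have Epos: "E > 0" using E_pos[OF hyp] E_def by simp
  have DE: "12 * E \<le> D" using D_pos(2)[OF hyp] by (simp add: E_def D_def)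
  have Dpos: "D > 0" using D_pos(1)[OF hyp] D_def by simp
  have rLpos: "0 < rL" using rL_pos[OF hyp] .
  define \<Phi> where "\<Phi> = Phi f N"
  have Phib: "\<eta> rL + 4*\<eta>(2*rL) - 2*\<eta>(2*rU) < \<Phi> j \<and> \<Phi> j < \<eta> rU + 4*\<eta>(2*rU) - 2*\<eta>(2*rL)"
    if "j \<in> {-N..N}" for j
    using Phi that unfolding \<Phi>_def Phi_def by auto
  have e2s: "\<eta> (2*rU) \<le> \<eta> s \<and> \<eta> s \<le> \<eta> (2*rL)" if "2*rL \<le> s" "s \<le> 2*rU" for s
    using mon2[OF hyp, of "2*rL" s] mon2[OF hyp, of s "2*rU"] that by auto
  have e2: "\<eta> (2*rU) \<le> \<eta> (2*rL)" using e2s[of "2*rL"] rLU by simp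
  have lipE: "\<bar>\<eta> s - \<eta> t\<bar> \<le> E * \<bar>s - t\<bar>" if "2*rL \<le> s" "s \<le> 2*rU" "2*rL \<le> t" "t \<le> 2*rU" for s t
    using lip2[OF hyp that] unfolding E_def .
  define \<rho> where "\<rho> m = hinv \<eta> rL rU (\<Phi> (-m))" for m
  have rho: "rL < \<rho> m \<and> \<rho> m < rU \<and> hat_eta \<eta> (\<rho> m) = \<Phi> (-m)" if m: "K \<le> m" "m \<le> N" for m
  proof -
    have "-m \<in> {-N..N}" using m NK by auto
    from Phib[OF this] e2 have "hat_eta \<eta> rL < \<Phi>(-m)" "\<Phi>(-m) < hat_eta \<eta> rU"
      unfolding hat_eta_def by linarith+
    then show ?thesis using hinv[OF hyp] unfolding \<rho>_def by auto
  qed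
  define S where "S = {-K+1..0::int}"
  have finS: "finite S" and S0: "0 \<in> S" using NK unfolding S_def by auto
  define R where "R x i = (if -N \<le> i \<and> i \<le> N then (if K \<le> \<bar>i\<bar> then \<rho> \<bar>i\<bar> else x (-\<bar>i\<bar>)) else 0)"
    for x :: "int \<Rightarrow> real" and i
  define arg where "arg r j = \<Phi> j + Cl \<eta> K r - \<eta> (r (j-1) + r j) - \<eta> (r j + r (j+1))" for r j
  define T where "T x = restrict (\<lambda>j. einv \<eta> rL rU (arg (R x) j)) S" for x
  define box where "box x \<longleftrightarrow> (\<forall>i\<in>S. rL \<le> x i \<and> x i \<le> rU)" for x :: "int \<Rightarrow> real"
  have Rbox: "rL \<le> R x i \<and> R x i \<le> rU" if "box x" "-N \<le> i" "i \<le> N" for x i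
  proof (cases "K \<le> \<bar>i\<bar>")
    case True
    have "\<bar>i\<bar> \<le> N" using that by auto
    then have "rL < \<rho> \<bar>i\<bar> \<and> \<rho> \<bar>i\<bar> < rU" using rho[of "\<bar>i\<bar>"] True by auto
    then show ?thesis using True that unfolding R_def by auto
  next
    case False then have "-\<bar>i\<bar> \<in> S" unfolding S_def by auto
    then show ?thesis using that False unfolding R_def box_def by auto
  qed
  have argb: "\<eta> rL < arg r j \<and> arg r j < \<eta> rU"
    if rb: "\<And>i. -N \<le> i \<Longrightarrow> i \<le> N \<Longrightarrow> rL \<le> r i \<and> r i \<le> rU" and j: "j \<in> S" for r j
  proof -
    have jr: "-N \<le> j - 1" "j + 1 \<le> N" "-N \<le> -K - 1" "-K+1 \<le> N" "-N \<le> j" "j \<le> N" "-N \<le> -K" "-K \<le> N"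
      using j NK unfolding S_def by auto
    have a1: "\<eta> (2*rU) \<le> \<eta> (r (-K-1) + r (-K)) \<and> \<eta> (r (-K-1) + r (-K)) \<le> \<eta> (2*rL)"
      using rb[of "-K-1"] rb[of "-K"] jr by (intro e2s) auto
    have a2: "\<eta> (2*rU) \<le> \<eta> (r (-K) + r (-K+1)) \<and> \<eta> (r (-K) + r (-K+1)) \<le> \<eta> (2*rL)"
      using rb[of "-K+1"] rb[of "-K"] jr by (intro e2s) auto
    have a3: "\<eta> (2*rU) \<le> \<eta> (2 * r (-K)) \<and> \<eta> (2 * r (-K)) \<le> \<eta> (2*rL)"
      using rb[of "-K"] jr by (intro e2s) auto
    have a4: "\<eta> (2*rU) \<le> \<eta> (r (j-1) + r j) \<and> \<eta> (r (j-1) + r j) \<le> \<eta> (2*rL)"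
      using rb[of "j-1"] rb[of j] jr by (intro e2s) auto
    have a5: "\<eta> (2*rU) \<le> \<eta> (r j + r (j+1)) \<and> \<eta> (r j + r (j+1)) \<le> \<eta> (2*rL)"
      using rb[of "j+1"] rb[of j] jr by (intro e2s) auto
    have "j \<in> {-N..N}" using jr by auto
    from Phib[OF this] show ?thesis using a1 a2 a3 a4 a5 unfolding arg_def Cl_def by linarith
  qed
  have arglip: "\<bar>arg r j - arg r' j\<bar> \<le> 5 * E * \<delta>"
    if rb: "\<And>i. -N \<le> i \<Longrightarrow> i \<le> N \<Longrightarrow> rL \<le> r i \<and> r i \<le> rU"
      and rb': "\<And>i. -N \<le> i \<Longrightarrow> i \<le> N \<Longrightarrow> rL \<le> r' i \<and> r' i \<le> rU"
      and dd: "\<And>i. \<bar>r i - r' i\<bar> \<le> \<delta>" and e1: "r (-K-1) = r' (-K-1)" and e0: "r (-K) = r' (-K)"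
      and j: "j \<in> S" for r r' j \<delta>
  proof -
    have jr: "-N \<le> j - 1" "j + 1 \<le> N" "-N \<le> -K - 1" "-K+1 \<le> N" "-N \<le> j" "j \<le> N" "-N \<le> -K" "-K \<le> N"
      using j NK unfolding S_def by auto
    define a1 where "a1 = \<eta> (r (-K) + r (-K+1)) - \<eta> (r' (-K) + r' (-K+1))"
    define a2 where "a2 = \<eta> (r (j-1) + r j) - \<eta> (r' (j-1) + r' j)"
    define a3 where "a3 = \<eta> (r j + r (j+1)) - \<eta> (r' j + r' (j+1))"
    have "\<bar>a1\<bar> \<le> E * \<bar>(r (-K) + r (-K+1)) - (r' (-K) + r' (-K+1))\<bar>"
      unfolding a1_def using rb[of "-K"] rb[of "-K+1"] rb'[of "-K"] rb'[of "-K+1"] jr by (intro lipE) auto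
    also have "\<dots> \<le> E * \<delta>" using e0 dd[of "-K+1"] Epos by (intro mult_left_mono) auto
    finally have b1: "\<bar>a1\<bar> \<le> E * \<delta>" .
    have "\<bar>a2\<bar> \<le> E * \<bar>(r (j-1) + r j) - (r' (j-1) + r' j)\<bar>"
      unfolding a2_def using rb[of "j-1"] rb[of j] rb'[of "j-1"] rb'[of j] jr by (intro lipE) auto
    also have "\<dots> \<le> E * (2 * \<delta>)" using dd[of "j-1"] dd[of j] Epos by (intro mult_left_mono) auto
    finally have b2: "\<bar>a2\<bar> \<le> E * (2 * \<delta>)" .
    have "\<bar>a3\<bar> \<le> E * \<bar>(r j + r (j+1)) - (r' j + r' (j+1))\<bar>"
      unfolding a3_def using rb[of "j+1"] rb[of j] rb'[of "j+1"] rb'[of j] jr by (intro lipE) auto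
    also have "\<dots> \<le> E * (2 * \<delta>)" using dd[of "j+1"] dd[of j] Epos by (intro mult_left_mono) auto
    finally have b3: "\<bar>a3\<bar> \<le> E * (2 * \<delta>)" .
    have "arg r j - arg r' j = a1 - a2 - a3"
      unfolding arg_def Cl_def a1_def a2_def a3_def e1 e0 by simp
    then show ?thesis using b1 b2 b3 by (simp add: abs_le_iff)
  qed
  have Tin: "T x \<in> extensional S \<and> box (T x)" if "box x" for x
  proof -
    have "rL < T x j \<and> T x j < rU" if j: "j \<in> S" for j
    proof -
      have "\<eta> rL < arg (R x) j \<and> arg (R x) j < \<eta> rU"
        using argb[of "R x" j] Rbox[of x] \<open>box x\<close> j by blast
      then show ?thesis using einv[OF hyp] j unfolding T_def by auto
    qed
    then show ?thesis unfolding T_def box_def by (fastforce intro: less_imp_le)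
  qed
  define c where "c = 5 * E / D"
  have c: "0 \<le> c" "c < 1" using Epos Dpos DE unfolding c_def by (auto simp: field_simps)
  have con: "\<forall>i\<in>S. \<bar>T x i - T y i\<bar> \<le> c * \<delta>"
    if bx: "box x" and "box y" and dd: "\<forall>i\<in>S. \<bar>x i - y i\<bar> \<le> \<delta>" for x y \<delta>
  proof
    fix j assume j: "j \<in> S"
    have d0: "0 \<le> \<delta>" using dd S0 by force
    have Rd: "\<bar>R x i - R y i\<bar> \<le> \<delta>" for i
    proof (cases "-N \<le> i \<and> i \<le> N \<and> \<not> K \<le> \<bar>i\<bar>")
      case True then have "-\<bar>i\<bar> \<in> S" unfolding S_def by auto
      then show ?thesis using True dd unfolding R_def by auto
    next
      case False then show ?thesis using d0 unfolding R_def by auto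
    qed
    have Re: "R x (-K-1) = R y (-K-1)" "R x (-K) = R y (-K)" unfolding R_def by auto
    have ax: "\<eta> rL < arg (R x) j \<and> arg (R x) j < \<eta> rU" using argb[of "R x" j] Rbox[of x] bx j by blast
    have ay: "\<eta> rL < arg (R y) j \<and> arg (R y) j < \<eta> rU" using argb[of "R y" j] Rbox[of y] \<open>box y\<close> j by blast
    have "D * \<bar>T x j - T y j\<bar> \<le> \<bar>arg (R x) j - arg (R y) j\<bar>"
      using einv_lip[OF hyp, of "arg (R x) j" "arg (R y) j"] ax ay j unfolding T_def D_def by auto
    also have "\<dots> \<le> 5 * E * \<delta>"
      by (rule arglip[of "R x" "R y"]) (use Rbox[of x] Rbox[of y] bx \<open>box y\<close> Rd Re j in auto)
    finally have "D * \<bar>T x j - T y j\<bar> \<le> 5 * E * \<delta>" .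
    then show "\<bar>T x j - T y j\<bar> \<le> c * \<delta>" using Dpos unfolding c_def by (simp add: field_simps)
  qed
  define P where "P r \<longleftrightarrow> r \<in> Omega N rL rU \<and> symmetric_vec N r \<and>
              (\<forall>j\<in>{-N..N+1}. Fqcf \<eta> N K r j + f j = 0)" for r
  have NK': "0 < K" "K < N - 1" using NK by auto
  have sol: "R (restrict s S) = s \<and> box (restrict s S) \<and> T (restrict s S) = restrict s S"
    if Ps: "P s" for s
  proof -
    have om: "rL < s i \<and> s i < rU" if "-N \<le> i" "i \<le> N" for i
      using Ps that unfolding P_def Omega_def by auto
    have om0: "s i = 0" if "\<not> (-N \<le> i \<and> i \<le> N)" for i
      using Ps that unfolding P_def Omega_def by auto
    have sy: "symmetric_vec N s" using Ps unfolding P_def by auto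
    have "\<forall>j\<in>{-N..0}. Fqcf \<eta> N K s j + f j = 0"
      using Ps full_equiv[OF sy NK' anti] unfolding P_def by auto
    then have Lc: "\<forall>j\<in>{-N..0}. Lc \<eta> K s j = \<Phi> j"
      using left_equiv[OF NK'] unfolding \<Phi>_def by blast
    have U1: "s j = \<rho> (-j)" if j: "-N \<le> j" "j \<le> -K" for j
    proof -
      have jj: "j \<in> {-N..0}" using j NK by auto
      have "Lc \<eta> K s j = \<Phi> j" using Lc jj by blast
      then have "hat_eta \<eta> (s j) = \<Phi> j" using j unfolding Lc_def by simp
      moreover have "rL < \<rho> (-j) \<and> \<rho> (-j) < rU \<and> hat_eta \<eta> (\<rho> (-j)) = \<Phi> j"
        using rho[of "-j"] j by auto
      moreover have "rL < s j \<and> s j < rU" using om j NK by auto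
      ultimately show ?thesis using hat_inj[OF hyp, of "s j" "\<rho> (-j)"] by auto
    qed
    have U2: "R (restrict s S) = s"
    proof
      fix i
      show "R (restrict s S) i = s i"
      proof (cases "-N \<le> i \<and> i \<le> N")
        case True
        then have si: "s (-\<bar>i\<bar>) = s i" using sym_all[OF sy, of i] by (cases "i \<ge> 0") auto
        show ?thesis
        proof (cases "K \<le> \<bar>i\<bar>")
          case True2: True
          have "s (-\<bar>i\<bar>) = \<rho> (- (-\<bar>i\<bar>))" using U1[of "-\<bar>i\<bar>"] True True2 by auto
          then show ?thesis using True True2 si unfolding R_def by auto
        next
          case False
          then have "-\<bar>i\<bar> \<in> S" unfolding S_def by auto
          then show ?thesis using True False si unfolding R_def by auto
        qed
      next
        case False
        then show ?thesis using om0 unfolding R_def by auto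
      qed
    qed
    have U3: "box (restrict s S)" unfolding box_def
    proof
      fix i assume i: "i \<in> S"
      then have "-N \<le> i" "i \<le> N" using NK unfolding S_def by auto
      then show "rL \<le> restrict s S i \<and> restrict s S i \<le> rU" using om[of i] i by auto
    qed
    have U4: "T (restrict s S) = restrict s S"
    proof
      fix j
      show "T (restrict s S) j = restrict s S j"
      proof (cases "j \<in> S")
        case True
        then have j: "-K < j" "j \<le> 0" "-N \<le> j" unfolding S_def using NK by auto
        have jj: "j \<in> {-N..0}" using j by auto
        have "Lc \<eta> K s j = \<Phi> j" using Lc jj by blast
        then have "L2 \<eta> K s j = \<Phi> j" using j unfolding Lc_def by simp
        then have "\<eta> (s j) = arg s j" unfolding L2_def arg_def by simp
        moreover have "rL < s j \<and> s j < rU" using om j NK by auto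
        ultimately have "einv \<eta> rL rU (arg s j) = s j" using einv_eta[OF hyp, of "s j"] by auto
        then show ?thesis using True U2 unfolding T_def by auto
      next
        case False then show ?thesis unfolding T_def by auto
      qed
    qed
    show ?thesis using U2 U3 U4 by blast
  qed
  have fx: "\<exists>x. x \<in> extensional S \<and> (\<forall>i\<in>S. rL \<le> x i \<and> x i \<le> rU) \<and> T x = x"
  proof (rule fixpoint_box[where T=T and c=c])
    show "finite S" by (rule finS)
  next
    show "S \<noteq> {}" using S0 by blast
  next
    show "rL \<le> rU" using rLU by simp
  next
    fix x :: "int \<Rightarrow> real" assume "\<forall>i\<in>S. rL \<le> x i \<and> x i \<le> rU"
    then have "box x" unfolding box_def .
    then have "T x \<in> extensional S \<and> box (T x)" by (rule Tin)
    then show "T x \<in> extensional S \<and> (\<forall>i\<in>S. rL \<le> T x i \<and> T x i \<le> rU)" unfolding box_def .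
  next
    show "0 \<le> c" by (rule c(1))
  next
    show "c < 1" by (rule c(2))
  next
    fix x y :: "int \<Rightarrow> real" and \<delta> :: real
    assume a: "\<forall>i\<in>S. rL \<le> x i \<and> x i \<le> rU" "\<forall>i\<in>S. rL \<le> y i \<and> y i \<le> rU" "\<forall>i\<in>S. \<bar>x i - y i\<bar> \<le> \<delta>"
    have "box x" "box y" using a(1,2) unfolding box_def by auto
    then show "\<forall>i\<in>S. \<bar>T x i - T y i\<bar> \<le> c * \<delta>" using con a(3) by blast
  qed
  have ex: "\<exists>r. P r"
  proof -
    obtain x where x: "x \<in> extensional S" "box x" "T x = x"
      using fx unfolding box_def by blast
    define r where "r = R x"
    have xS: "rL < x j \<and> x j < rU \<and> \<eta> (x j) = arg r j" if j: "j \<in> S" for j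
    proof -
      have "\<eta> rL < arg r j \<and> arg r j < \<eta> rU" using argb[of "R x" j] Rbox[of x] x(2) j unfolding r_def by blast
      moreover have "x j = einv \<eta> rL rU (arg r j)"
      proof -
        have "x j = T x j" using x(3) by simp
        also have "\<dots> = einv \<eta> rL rU (arg r j)" unfolding T_def r_def using j by simp
        finally show ?thesis .
      qed
      ultimately show ?thesis using einv[OF hyp, of "arg r j"] by auto
    qed
    have rb: "rL < r i \<and> r i < rU" if i: "-N \<le> i" "i \<le> N" for i
    proof (cases "K \<le> \<bar>i\<bar>")
      case True
      have "\<bar>i\<bar> \<le> N" using i by auto
      then have "rL < \<rho> \<bar>i\<bar> \<and> \<rho> \<bar>i\<bar> < rU" using rho[of "\<bar>i\<bar>"] True by auto
      moreover have "r i = \<rho> \<bar>i\<bar>" using True i unfolding r_def R_def by auto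
      ultimately show ?thesis by simp
    next
      case False
      then have iS: "-\<bar>i\<bar> \<in> S" unfolding S_def by auto
      have "r i = x (-\<bar>i\<bar>)" using False i unfolding r_def R_def by auto
      then show ?thesis using xS[OF iS] by simp
    qed
    have r0: "r i = 0" if "i \<notin> {-N..N}" for i using that unfolding r_def R_def by auto
    have rO: "r \<in> Omega N rL rU" unfolding Omega_def using rb r0 by auto
    have rs: "symmetric_vec N r" unfolding symmetric_vec_def r_def R_def by auto
    have "\<forall>j\<in>{-N..0}. Lc \<eta> K r j = \<Phi> j"
    proof
      fix j assume j: "j \<in> {-N..0}"
      show "Lc \<eta> K r j = \<Phi> j"
      proof (cases "j \<le> -K")
        case True
        then have "r j = \<rho> \<bar>j\<bar>" using j NK unfolding r_def R_def by auto
        moreover have "hat_eta \<eta> (\<rho> \<bar>j\<bar>) = \<Phi> j" using rho[of "\<bar>j\<bar>"] True j NK by auto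
        ultimately show ?thesis using True unfolding Lc_def by auto
      next
        case False
        then have jS: "j \<in> S" using j unfolding S_def by auto
        have "r j = x j" using False j NK unfolding r_def R_def by auto
        then have "\<eta> (r j) = arg r j" using xS[OF jS] by simp
        then show ?thesis using False unfolding Lc_def L2_def arg_def by simp
      qed
    qed
    then have "\<forall>j\<in>{-N..0}. Fqcf \<eta> N K r j + f j = 0"
      using left_equiv[OF NK'] unfolding \<Phi>_def by blast
    then have "\<forall>j\<in>{-N..N+1}. Fqcf \<eta> N K r j + f j = 0"
      using full_equiv[OF rs NK' anti] by blast
    then show "\<exists>r. P r" using rO rs unfolding P_def by blast
  qed
  have un: "r = r'" if Pr: "P r" and Pr': "P r'" for r r'
  proof -
    define x where "x = restrict r S"
    define y where "y = restrict r' S"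
    have sx: "R x = r" "box x" "T x = x" using sol[OF Pr] unfolding x_def by auto
    have sy: "R y = r'" "box y" "T y = y" using sol[OF Pr'] unfolding y_def by auto
    define \<delta> where "\<delta> = Max ((\<lambda>i. \<bar>x i - y i\<bar>) ` S)"
    have dge: "\<forall>i\<in>S. \<bar>x i - y i\<bar> \<le> \<delta>" unfolding \<delta>_def using finS by auto
    have "\<delta> \<in> (\<lambda>i. \<bar>x i - y i\<bar>) ` S" unfolding \<delta>_def using finS S0 by (intro Max_in) auto
    then obtain i0 where i0: "i0 \<in> S" "\<delta> = \<bar>x i0 - y i0\<bar>" by blast
    have "\<bar>T x i0 - T y i0\<bar> \<le> c * \<delta>" using con[OF sx(2) sy(2) dge] i0 by blast
    then have "\<delta> \<le> c * \<delta>" using i0 sx(3) sy(3) by simp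
    moreover have "0 \<le> \<delta>" using i0 by simp
    ultimately have "(1 - c) * \<delta> \<le> 0" by (simp add: algebra_simps)
    then have "\<delta> \<le> 0" using c by (simp add: mult_le_0_iff)
    then have "\<forall>i\<in>S. x i = y i" using dge by force
    then have "x = y" unfolding x_def y_def by auto
    then show "r = r'" using sx(1) sy(1) by simp
  qed
  have "\<exists>!r. P r" using ex un by (rule ex_ex1I)
  then show ?thesis unfolding P_def .
qed


end
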